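(* For every integer $n\geq 1$, $$(2-t)\bigl(B_n(t)S_{n+1}(t)-S_n(t)B_{n+1}(t)\bigr)=t^{\lfloor\log_2 n\rfloor}\bigl(B_{n+1}(t)-B_n(t)-t+1\bigr).$$
   Context: The Stern polynomials $B_n(t)\in\mathbb{Z}[t]$ are defined by $B_0(t)=0$, $B_1(t)=1$, and for $n\geq 1$: $B_{2n}(t)=tB_n(t)$, $B_{2n+1}(t)=B_n(t)+B_{n+1}(t)$. The polynomials $S_n(t)$, $n\ge1$, are defined by $S_1(t)=S_2(t)=0$ and, for $k\geq 1$, $S_{2k}(t)=tS_k(t)$, $S_{2k+1}(t)=S_k(t)+S_{k+1}(t)+t^{\lfloor\log_2 k\rfloor}$ (so e.g. $S_3=1$, $S_5=1+t$, $S_9=1+t+t^2$). *)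

theory Defs
  imports "HOL-Computational_Algebra.Polynomial" "HOL-Library.Discrete_Functions"
begin

function stern_B :: "nat \<Rightarrow> int poly" where
  "stern_B n = (if n = 0 then 0 else if n = 1 then 1
               else if even n then [:0, 1:] * stern_B (n div 2)
               else stern_B (n div 2) + stern_B (n div 2 + 1))"
  by auto
termination by (relation "measure id") (auto elim!: oddE)

(* S_n(t), n >= 1: S_1 = S_2 = 0, S_{2k} = t S_k,
   S_{2k+1} = S_k + S_{k+1} + t^(floor(log_2 k)).
   S_0 is an unused dummy value 0.  floor_log k = floor(log_2 k) for k >= 1. *)
function stern_S :: "nat \<Rightarrow> int poly" where
  "stern_S n = (if n \<le> 2 then 0
               else if even n then [:0, 1:] * stern_S (n div 2)
               else stern_S (n div 2) + stern_S (n div 2 + 1)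
                    + [:0, 1:] ^ floor_log (n div 2))"
  by auto
termination by (relation "measure id") (auto elim!: oddE)

end

theory Submission
  imports Defs
begin

declare stern_B.simps[simp del] stern_S.simps[simp del]

lemma B_even: "k \<ge> 1 \<Longrightarrow> stern_B (2*k) = [:0,1:] * stern_B k"
  by (subst stern_B.simps) auto
lemma B_odd: "k \<ge> 1 \<Longrightarrow> stern_B (2*k+1) = stern_B k + stern_B (k+1)"
  by (subst stern_B.simps) auto
lemma S1: "stern_S 1 = 0" by (subst stern_S.simps) auto
lemma S2: "stern_S 2 = 0" by (subst stern_S.simps) auto
lemma S_even: "k \<ge> 1 \<Longrightarrow> stern_S (2*k) = [:0,1:] * stern_S k"
  by (cases "k = 1") (simp_all add: S1[simplified] S2 stern_S.simps[of "2*k"])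
lemma S_odd: "k \<ge> 1 \<Longrightarrow> stern_S (2*k+1) = stern_S k + stern_S (k+1) + [:0,1:] ^ floor_log k"
  by (subst stern_S.simps) auto
lemma B1: "stern_B 1 = 1" by (subst stern_B.simps) auto
lemma B2: "stern_B 2 = [:0,1:]" using B_even[of 1] B1 by simp

lemma alg_even:
  fixes t Bk Bk1 Sk Sk1 p :: "'a::comm_ring_1"
  assumes "(2 - t) * (Bk * Sk1 - Sk * Bk1) = p * (Bk1 - Bk - t + 1)"
  shows "(2 - t) * ((t*Bk) * (Sk + Sk1 + p) - (t*Sk) * (Bk + Bk1))
       = (t * p) * ((Bk + Bk1) - t * Bk - t + 1)"
proof -
  have "(2 - t) * ((t*Bk) * (Sk + Sk1 + p) - (t*Sk) * (Bk + Bk1))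
      = t * ((2 - t) * (Bk * Sk1 - Sk * Bk1)) + (2 - t) * t * p * Bk"
    by (simp add: algebra_simps)
  also have "\<dots> = t * (p * (Bk1 - Bk - t + 1)) + (2 - t) * t * p * Bk"
    using assms by simp
  also have "\<dots> = (t * p) * ((Bk + Bk1) - t * Bk - t + 1)"
    by (simp add: algebra_simps)
  finally show ?thesis .
qed

lemma alg_odd:
  fixes t Bk Bk1 Sk Sk1 p :: "'a::comm_ring_1"
  assumes "(2 - t) * (Bk * Sk1 - Sk * Bk1) = p * (Bk1 - Bk - t + 1)"
  shows "(2 - t) * ((Bk + Bk1) * (t * Sk1) - (Sk + Sk1 + p) * (t * Bk1))
       = (t * p) * (t * Bk1 - (Bk + Bk1) - t + 1)"
proof -
  have "(2 - t) * ((Bk + Bk1) * (t * Sk1) - (Sk + Sk1 + p) * (t * Bk1))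
      = t * ((2 - t) * (Bk * Sk1 - Sk * Bk1)) - (2 - t) * t * p * Bk1"
    by (simp add: algebra_simps)
  also have "\<dots> = t * (p * (Bk1 - Bk - t + 1)) - (2 - t) * t * p * Bk1"
    using assms by simp
  also have "\<dots> = (t * p) * (t * Bk1 - (Bk + Bk1) - t + 1)"
    by (simp add: algebra_simps)
  finally show ?thesis .
qed

lemma two_minus: "[:2, -1:] = (2 - [:0,1:] :: int poly)"
  by (simp add: numeral_poly)

theorem mainTheorem13:
  fixes n :: nat
  assumes "n \<ge> 1"
  shows "[:2, -1:] * (stern_B n * stern_S (n + 1) - stern_S n * stern_B (n + 1))
         = [:0, 1:] ^ floor_log n * (stern_B (n + 1) - stern_B n - [:0, 1:] + 1)"
  using assms
proof (induction n rule: less_induct)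
  case (less n)
  show ?case
  proof (cases "n = 1")
    case True
    have a: "stern_B (Suc (Suc 0)) = [:0,1:]" "stern_S (Suc (Suc 0)) = 0"
      using B2 S2 by (simp_all add: numeral_2_eq_2)
    show ?thesis using True by (simp add: a B1[simplified] S1[simplified])
  next
    case False
    then have n2: "n \<ge> 2" using less.prems by simp
    define k where "k = n div 2"
    have k1: "k \<ge> 1" and kn: "k < n" using n2 by (auto simp: k_def)
    have IH: "(2 - [:0,1:]) * (stern_B k * stern_S (k + 1) - stern_S k * stern_B (k + 1))
         = [:0, 1:] ^ floor_log k * (stern_B (k + 1) - stern_B k - [:0, 1:] + 1)"
      using less.IH[OF kn k1] by (simp add: two_minus)
    show ?thesis
    proof (cases "even n")
      case True
      then have nk: "n = 2*k" by (simp add: k_def)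
      have fl: "floor_log (2*k) = Suc (floor_log k)" using k1 by simp
      show ?thesis unfolding two_minus nk fl power_Suc
        B_even[OF k1] S_even[OF k1] B_odd[OF k1] S_odd[OF k1]
        by (rule alg_even[OF IH])
    next
      case False
      then have nk: "n = 2*k+1" by (simp add: k_def)
      have fl: "floor_log (2*k+1) = Suc (floor_log k)" using nk k1 floor_log_rec[of n] n2
        by (simp add: k_def)
      have e1: "2*k+1+1 = 2*(k+1)" by simp
      have k2: "k + 1 \<ge> 1" by simp
      show ?thesis unfolding two_minus nk fl e1 power_Suc
        B_even[OF k2] S_even[OF k2] B_odd[OF k1] S_odd[OF k1]
        by (rule alg_odd[OF IH])
    qed
  qed
qed

end
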